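(* The optimal value $\rho$ of the linear program $$\rho=\inf_{v\in\mathscr C(\mathcal Q)}\int_{\mathcal Q} v(q)\,dq\quad\text{s.t. } v(q)-x\ge 0\ \text{for all }(q,x,y)\in\mathcal Z$$ (equivalently, the optimal value of its dual $\sup_{\mu\in\mathscr M^+(\mathcal Z)}\int_{\mathcal Z}x\,d\mu$ subject to $\int_{\mathcal Z}q^\alpha d\mu=\int_{\mathcal Q}q^\alpha dq$ for all $\alpha\in\mathbb N^n$) equals $\int_{\mathcal Q} a(q)\,dq$.
   Context: Let $n\ge1$, $\mathcal Q=[-1,1]^n$, and $dq$ denote Lebesgue measure. Let $m\ge1$ and $p(q,s)=\sum_{k=0}^m p_k(q)s^k$ with $p_k\in\mathbb R[q]$ and $p_m\equiv1$, where $q\in\mathcal Q$, $s\in\mathbb C$. The abscissa is $a(q)=\max\{\Re(s): s\in\mathbb C,\ p(q,s)=0\}$ for $q\in\mathcal Q$ (a continuous function). Writing $s=x+iy$, define $p_\Re,p_\Im\in\mathbb R[q,x,y]$ by $p(q,x+iy)=p_\Re(q,x,y)+i\,p_\Im(q,x,y)$, and $\mathcal Z=\{(q,x,y): q\in\mathcal Q,\ p_\Re(q,x,y)=p_\Im(q,x,y)=0\}$. $\mathscr C(\mathcal Q)$ denotes continuous real functions on $\mathcal Q$, $\mathscr M^+(\mathcal Z)$ finite nonnegative Borel measures supported on $\mathcal Z$, $q^\alpha=q_1^{\alpha_1}\cdots q_n^{\alpha_n}$. *)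

theory Defs
  imports "HOL-Analysis.Analysis"
begin

definition Qbox :: "(real ^ 'n) set" where
  "Qbox = {q. \<forall>i. -1 \<le> q $ i \<and> q $ i \<le> 1}"

definition mpoly_fun :: "(real ^ 'n \<Rightarrow> real) \<Rightarrow> bool" where
  "mpoly_fun f \<longleftrightarrow> (\<exists>A c. finite (A :: (nat ^ 'n) set) \<and>
      f = (\<lambda>q. \<Sum>\<alpha>\<in>A. c \<alpha> * (\<Prod>i\<in>UNIV. q $ i ^ (\<alpha> $ i))))"

definition pval :: "(nat \<Rightarrow> real ^ 'n \<Rightarrow> real) \<Rightarrow> nat \<Rightarrow> real ^ 'n \<Rightarrow> complex \<Rightarrow> complex" where
  "pval P m q s = (\<Sum>k\<le>m. complex_of_real (P k q) * s ^ k)"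

definition abscissa :: "(nat \<Rightarrow> real ^ 'n \<Rightarrow> real) \<Rightarrow> nat \<Rightarrow> real ^ 'n \<Rightarrow> real" where
  "abscissa P m q = Max {Re s | s. pval P m q s = 0}"

definition pRe :: "(nat \<Rightarrow> real ^ 'n \<Rightarrow> real) \<Rightarrow> nat \<Rightarrow> real ^ 'n \<Rightarrow> real \<Rightarrow> real \<Rightarrow> real" where
  "pRe P m q x y = Re (pval P m q (Complex x y))"
definition pIm :: "(nat \<Rightarrow> real ^ 'n \<Rightarrow> real) \<Rightarrow> nat \<Rightarrow> real ^ 'n \<Rightarrow> real \<Rightarrow> real \<Rightarrow> real" where
  "pIm P m q x y = Im (pval P m q (Complex x y))"

definition Zset :: "(nat \<Rightarrow> real ^ 'n \<Rightarrow> real) \<Rightarrow> nat \<Rightarrow> ((real ^ 'n) \<times> real \<times> real) set" where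
  "Zset P m = {(q, x, y). q \<in> Qbox \<and> pRe P m q x y = 0 \<and> pIm P m q x y = 0}"

definition rho :: "(nat \<Rightarrow> real ^ 'n \<Rightarrow> real) \<Rightarrow> nat \<Rightarrow> real" where
  "rho P m = Inf {integral Qbox v | v. continuous_on Qbox v \<and>
                    (\<forall>(q, x, y) \<in> Zset P m. v q - x \<ge> 0)}"

end

theory Submission imports Defs "HOL-Computational_Algebra.Fundamental_Theorem_Algebra" begin

definition pp :: "(nat \<Rightarrow> real ^ 'n \<Rightarrow> real) \<Rightarrow> nat \<Rightarrow> real ^ 'n \<Rightarrow> complex poly" where
  "pp P m q = (\<Sum>k\<le>m. monom (complex_of_real (P k q)) k)"

lemma poly_pp: "poly (pp P m q) s = pval P m q s"
  by (simp add: pp_def pval_def poly_sum poly_monom)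

lemma coeff_pp: "coeff (pp P m q) j = (if j \<le> m then complex_of_real (P j q) else 0)"
  by (simp add: pp_def coeff_sum coeff_monom)

lemma degree_pp: assumes "P m q = 1" shows "degree (pp P m q) = m" "lead_coeff (pp P m q) = 1"
proof -
  have "degree (pp P m q) \<le> m" by (rule degree_le) (simp add: coeff_pp)
  moreover have "m \<le> degree (pp P m q)" by (rule le_degree) (simp add: coeff_pp assms)
  ultimately show "degree (pp P m q) = m" by simp
  then show "lead_coeff (pp P m q) = 1" by (simp add: coeff_pp assms)
qed

lemma prod_mset_ge:
  fixes A :: "complex multiset"
  assumes "\<forall>x\<in>#A. e \<le> norm (s - x)" "0 \<le> e"
  shows "e ^ size A \<le> norm (\<Prod>x\<in>#A. s - x)"
  using assms
proof (induction A)
  case empty then show ?case by simp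
next
  case (add x A)
  then have "e ^ size A \<le> norm (\<Prod>x\<in>#A. s - x)" "e \<le> norm (s - x)" by auto
  then have "e * e ^ size A \<le> norm (s - x) * norm (\<Prod>x\<in>#A. s - x)"
    using add.prems by (intro mult_mono) auto
  then show ?case by (simp add: norm_mult)
qed

lemma near_root:
  assumes "P m q = 1" "m \<ge> 1" "e > 0" "norm (pval P m q s0) < e ^ m"
  shows "\<exists>r. pval P m q r = 0 \<and> norm (s0 - r) < e"
proof (rule ccontr)
  assume H: "\<not> ?thesis"
  let ?p = "pp P m q"
  have nz: "?p \<noteq> 0" using degree_pp[of P m q, OF assms(1)] by auto
  have dec: "?p = (\<Prod>x\<in>#proots ?p. [:-x, 1:])"
    using complex_poly_decompose_multiset[of ?p] degree_pp[of P m q, OF assms(1)] by simp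
  have "pval P m q s0 = (\<Prod>x\<in>#proots ?p. s0 - x)"
    by (subst poly_pp[symmetric], subst dec) (simp add: poly_prod_mset)
  moreover have "\<forall>x\<in>#proots ?p. e \<le> norm (s0 - x)"
    using H nz by (auto simp: poly_pp not_less)
  ultimately have "e ^ size (proots ?p) \<le> norm (pval P m q s0)"
    using prod_mset_ge assms(3) by simp
  moreover have "size (proots ?p) = m" using size_proots_complex degree_pp[of P m q, OF assms(1)] by simp
  ultimately show False using assms(4) by simp
qed

lemma roots_fin_ne:
  assumes "P m q = 1" "m \<ge> 1"
  shows "finite {s. pval P m q s = 0}" "{s. pval P m q s = 0} \<noteq> {}"
proof -
  let ?p = "pp P m q"
  have nz: "?p \<noteq> 0" using degree_pp[of P m q, OF assms(1)] assms by auto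
  show "finite {s. pval P m q s = 0}" using poly_roots_finite[OF nz] by (simp add: poly_pp)
  have "size (proots ?p) = m" using size_proots_complex degree_pp[of P m q, OF assms(1)] by simp
  then have "proots ?p \<noteq> {#}" using assms by auto
  then obtain x where "x \<in># proots ?p" by blast
  then show "{s. pval P m q s = 0} \<noteq> {}" using nz by (auto simp: poly_pp)
qed

lemma abscissa_ge:
  assumes "P m q = 1" "m \<ge> 1" "pval P m q s = 0"
  shows "Re s \<le> abscissa P m q"
proof -
  have "{Re s | s. pval P m q s = 0} = Re ` {s. pval P m q s = 0}" by auto
  then show ?thesis unfolding abscissa_def using roots_fin_ne[of P m q, OF assms(1,2)] assms(3)
    by (intro Max_ge) auto
qed

lemma abscissa_attained:
  assumes "P m q = 1" "m \<ge> 1"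
  shows "\<exists>s. pval P m q s = 0 \<and> Re s = abscissa P m q"
proof -
  have e: "{Re s | s. pval P m q s = 0} = Re ` {s. pval P m q s = 0}" by auto
  have "abscissa P m q \<in> Re ` {s. pval P m q s = 0}" unfolding abscissa_def e
    using roots_fin_ne[of P m q, OF assms(1,2)] by (intro Max_in) auto
  then show ?thesis by auto
qed

lemma mpoly_cont: "mpoly_fun f \<Longrightarrow> continuous_on S f"
  unfolding mpoly_fun_def by (auto intro!: continuous_intros)

lemma pval_split:
  assumes "P m q = 1" "m = Suc m'"
  shows "pval P m q s = (\<Sum>k<m. complex_of_real (P k q) * s ^ k) + s ^ m"
  using assms unfolding pval_def by (simp add: lessThan_Suc_atMost[symmetric])

lemma root_bound_aux:
  assumes "P m q = 1" "m \<ge> 1" "pval P m q s = 0" "(\<Sum>k<m. \<bar>P k q\<bar>) \<le> B"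
  shows "norm s \<le> max 1 B"
proof (rule ccontr)
  assume "\<not> ?thesis"
  then have s1: "norm s > 1" and sB: "norm s > B" by auto
  obtain m' where m': "m = Suc m'" using assms(2) by (cases m) auto
  have "s ^ m = - (\<Sum>k<m. complex_of_real (P k q) * s ^ k)"
    using pval_split[of P m q m' s, OF assms(1) m'] assms(3) by (simp add: add_eq_0_iff)
  then have "norm s ^ m = norm (\<Sum>k<m. complex_of_real (P k q) * s ^ k)"
    by (metis norm_minus_cancel norm_power)
  also have "\<dots> \<le> (\<Sum>k<m. \<bar>P k q\<bar> * norm s ^ k)"
    by (rule order_trans[OF norm_sum]) (simp add: norm_mult norm_power)
  also have "\<dots> \<le> (\<Sum>k<m. \<bar>P k q\<bar> * norm s ^ m')"
    using s1 m' by (intro sum_mono mult_left_mono power_increasing) auto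
  also have "\<dots> = (\<Sum>k<m. \<bar>P k q\<bar>) * norm s ^ m'" by (simp add: sum_distrib_right)
  also have "\<dots> \<le> B * norm s ^ m'" using assms(4) by (intro mult_right_mono) auto
  finally have "norm s * norm s ^ m' \<le> B * norm s ^ m'" using m' by simp
  moreover have "norm s ^ m' > 0" using s1 by (intro zero_less_power) auto
  ultimately have "norm s \<le> B" by (simp add: mult_le_cancel_right)
  then show False using sB by simp
qed

lemma Qbox_cbox: "Qbox = cbox (- 1) (1 :: real ^ 'n)"
  unfolding Qbox_def by (auto simp: mem_box_cart)

lemma root_bound:
  assumes "m \<ge> 1" "\<And>k. k \<le> m \<Longrightarrow> continuous_on Qbox (P k)" "P m = (\<lambda>_. 1)"
  shows "\<exists>R. \<forall>q\<in>Qbox. \<forall>s. pval P m q s = 0 \<longrightarrow> norm s \<le> R"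
proof -
  have "compact (Qbox :: (real ^ 'n) set)" by (simp add: Qbox_cbox)
  moreover have "(Qbox :: (real ^ 'n) set) \<noteq> {}" by (auto simp: Qbox_def intro!: exI[of _ 0])
  moreover have "continuous_on Qbox (\<lambda>q. \<Sum>k<m. \<bar>P k q\<bar>)"
    using assms(2) by (intro continuous_intros) auto
  ultimately obtain qm where qm: "qm \<in> Qbox" "\<forall>q\<in>Qbox. (\<Sum>k<m. \<bar>P k q\<bar>) \<le> (\<Sum>k<m. \<bar>P k qm\<bar>)"
    using continuous_attains_sup by blast
  show ?thesis using root_bound_aux[of P m _ _ "\<Sum>k<m. \<bar>P k qm\<bar>"] assms(1,3) qm(2) by auto
qed

lemma pval_cont:
  assumes "\<And>k. k \<le> m \<Longrightarrow> continuous_on S (P k)"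
  shows "continuous_on S (\<lambda>q. pval P m q s)"
  unfolding pval_def using assms by (intro continuous_intros) auto

lemma pval_cont_s: "continuous_on C (\<lambda>s. pval P m q s)"
  unfolding pval_def by (intro continuous_intros)

lemma pval_diff_bound:
  assumes "norm s \<le> R"
  shows "norm (pval P m q0 s - pval P m q s) \<le> (\<Sum>k\<le>m. \<bar>P k q - P k q0\<bar> * R ^ k)"
proof -
  have "pval P m q0 s - pval P m q s = (\<Sum>k\<le>m. complex_of_real (P k q0 - P k q) * s ^ k)"
    unfolding pval_def by (simp add: sum_subtractf[symmetric] algebra_simps)
  also have "norm \<dots> \<le> (\<Sum>k\<le>m. norm (complex_of_real (P k q0 - P k q) * s ^ k))"
    by (rule norm_sum)
  also have "\<dots> \<le> (\<Sum>k\<le>m. \<bar>P k q - P k q0\<bar> * R ^ k)"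
  proof (rule sum_mono)
    fix k
    have "norm s ^ k \<le> R ^ k" using assms by (intro power_mono) auto
    then show "norm (complex_of_real (P k q0 - P k q) * s ^ k) \<le> \<bar>P k q - P k q0\<bar> * R ^ k"
      by (simp add: norm_mult norm_power abs_minus_commute mult_left_mono flip: of_real_diff)
  qed
  finally show ?thesis .
qed

lemma abscissa_cont:
  fixes P :: "nat \<Rightarrow> real ^ 'n \<Rightarrow> real"
  assumes m1: "m \<ge> 1" and cont: "\<And>k. k \<le> m \<Longrightarrow> continuous_on Qbox (P k)"
    and Pm: "P m = (\<lambda>_. 1)"
  shows "continuous_on Qbox (abscissa P m)"
  unfolding continuous_on_def
proof (intro ballI)
  fix q0 :: "real ^ 'n" assume q0: "q0 \<in> Qbox"
  let ?F = "at q0 within Qbox"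
  let ?a = "abscissa P m"
  have Pm1: "\<And>q. P m q = 1" using Pm by simp
  show "(?a \<longlongrightarrow> ?a q0) ?F"
    unfolding tendsto_iff
  proof (intro allI impI)
    fix e :: real assume e: "e > 0"
    have inQ: "eventually (\<lambda>q. q \<in> Qbox) ?F" by (simp add: eventually_at_filter)
    have lower: "eventually (\<lambda>q. ?a q > ?a q0 - e) ?F"
    proof -
      obtain s0 where s0: "pval P m q0 s0 = 0" "Re s0 = ?a q0"
        using abscissa_attained[of P m q0] Pm1 m1 by auto
      have "((\<lambda>q. pval P m q s0) \<longlongrightarrow> pval P m q0 s0) ?F"
        using pval_cont[of m Qbox P s0] cont q0 unfolding continuous_on_def by blast
      moreover have "e ^ m > 0" using e by simp
      ultimately have "eventually (\<lambda>q. dist (pval P m q s0) (pval P m q0 s0) < e ^ m) ?F"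
        unfolding tendsto_iff by blast
      then show ?thesis
      proof (rule eventually_mono)
        fix q assume "dist (pval P m q s0) (pval P m q0 s0) < e ^ m"
        then have "norm (pval P m q s0) < e ^ m" using s0 by (simp add: dist_norm)
        then obtain r where r: "pval P m q r = 0" "norm (s0 - r) < e"
          using near_root[of P m q e s0] Pm1 m1 e by auto
        have "Re r \<le> ?a q" using abscissa_ge[of P m q r] Pm1 m1 r by simp
        moreover have "\<bar>Re (s0 - r)\<bar> < e" using abs_Re_le_cmod[of "s0 - r"] r by linarith
        ultimately show "?a q > ?a q0 - e" using s0 by simp
      qed
    qed
    have upper: "eventually (\<lambda>q. q \<in> Qbox \<longrightarrow> ?a q < ?a q0 + e) ?F"
    proof -
      obtain R where R: "\<forall>q\<in>Qbox. \<forall>s. pval P m q s = 0 \<longrightarrow> norm s \<le> R"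
        using root_bound[of m P] m1 cont Pm by blast
      define C where "C = cball 0 R \<inter> {s. Re s \<ge> ?a q0 + e}"
      have "\<exists>\<eta>>0. \<forall>s\<in>C. \<eta> \<le> norm (pval P m q0 s)"
      proof (cases "C = {}")
        case True then show ?thesis by (intro exI[of _ 1]) auto
      next
        case False
        have "compact C" unfolding C_def
          by (intro compact_Int_closed compact_cball closed_halfspace_Re_ge)
        moreover have "continuous_on C (\<lambda>s. norm (pval P m q0 s))"
          by (intro continuous_intros pval_cont_s)
        ultimately obtain s1 where s1: "s1 \<in> C" "\<forall>s\<in>C. norm (pval P m q0 s1) \<le> norm (pval P m q0 s)"
          using continuous_attains_inf[of C] False by blast
        have "pval P m q0 s1 \<noteq> 0"
        proof
          assume "pval P m q0 s1 = 0"
          then have "Re s1 \<le> ?a q0" using abscissa_ge[of P m q0 s1] Pm1 m1 by simp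
          then show False using s1(1) e unfolding C_def by auto
        qed
        then show ?thesis using s1 by (intro exI[of _ "norm (pval P m q0 s1)"]) auto
      qed
      then obtain \<eta> where eta: "\<eta> > 0" "\<forall>s\<in>C. \<eta> \<le> norm (pval P m q0 s)" by blast
      define D where "D q = (\<Sum>k\<le>m. \<bar>P k q - P k q0\<bar> * R ^ k)" for q
      have "continuous_on Qbox D" unfolding D_def using cont by (intro continuous_intros) auto
      then have "(D \<longlongrightarrow> D q0) ?F" using q0 unfolding continuous_on_def by blast
      moreover have "D q0 = 0" by (simp add: D_def)
      ultimately have "eventually (\<lambda>q. dist (D q) 0 < \<eta>) ?F"
        using eta(1) unfolding tendsto_iff by auto
      then show ?thesis
      proof (rule eventually_mono)
        fix q assume Dq: "dist (D q) 0 < \<eta>"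
        show "q \<in> Qbox \<longrightarrow> ?a q < ?a q0 + e"
        proof
          assume qQ: "q \<in> Qbox"
          obtain s where s: "pval P m q s = 0" "Re s = ?a q"
            using abscissa_attained[of P m q] Pm1 m1 by auto
          have ns: "norm s \<le> R" using R qQ s by blast
          show "?a q < ?a q0 + e"
          proof (rule ccontr)
            assume "\<not> ?a q < ?a q0 + e"
            then have "s \<in> C" unfolding C_def using s ns by auto
            then have "\<eta> \<le> norm (pval P m q0 s)" using eta by blast
            also have "\<dots> = norm (pval P m q0 s - pval P m q s)" using s by simp
            also have "\<dots> \<le> D q" unfolding D_def by (rule pval_diff_bound[OF ns])
            finally show False using Dq by (simp add: dist_norm)
          qed
        qed
      qed
    qed
    show "eventually (\<lambda>q. dist (?a q) (?a q0) < e) ?F"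
      using eventually_conj[OF inQ eventually_conj[OF lower upper]]
      by (rule eventually_mono) (auto simp: dist_real_def abs_less_iff)
  qed
qed

theorem mainTheorem2:
  fixes P :: "nat \<Rightarrow> real ^ 'n \<Rightarrow> real" and m :: nat
  assumes "m \<ge> 1"
    and "\<And>k. k \<le> m \<Longrightarrow> mpoly_fun (P k)"
    and "P m = (\<lambda>_. 1)"
  shows "rho P m = integral Qbox (abscissa P m)"
proof -
  have cont: "\<And>k. k \<le> m \<Longrightarrow> continuous_on Qbox (P k)" using assms(2) mpoly_cont by blast
  have ca: "continuous_on Qbox (abscissa P m)" using abscissa_cont[of m P, OF assms(1) cont assms(3)] by blast
  have Pm1: "\<And>q. P m q = 1" using assms(3) by simp
  have ia: "abscissa P m integrable_on Qbox" using ca unfolding Qbox_cbox by (rule integrable_continuous)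
  have feas: "\<forall>(q, x, y) \<in> Zset P m. abscissa P m q - x \<ge> 0"
  proof (clarify)
    fix q :: "real ^ 'n" and x y assume "(q, x, y) \<in> Zset P m"
    then have "pval P m q (Complex x y) = 0" unfolding Zset_def pRe_def pIm_def
      by (simp add: complex_eq_iff)
    then have "Re (Complex x y) \<le> abscissa P m q" using abscissa_ge[of P m q] Pm1 assms(1) by blast
    then show "abscissa P m q - x \<ge> 0" by simp
  qed
  show ?thesis unfolding rho_def
  proof (rule cInf_eq_minimum)
    show "integral Qbox (abscissa P m) \<in> {integral Qbox v | v. continuous_on Qbox v \<and>
                    (\<forall>(q, x, y) \<in> Zset P m. v q - x \<ge> 0)}"
      using ca feas by blast
  next
    fix z assume "z \<in> {integral Qbox v | v. continuous_on Qbox v \<and>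
                    (\<forall>(q, x, y) \<in> Zset P m. v q - x \<ge> 0)}"
    then obtain v where v: "z = integral Qbox v" "continuous_on Qbox v"
      "\<forall>(q, x, y) \<in> Zset P m. v q - x \<ge> 0" by blast
    have iv: "v integrable_on Qbox" using v(2) unfolding Qbox_cbox by (rule integrable_continuous)
    have "\<And>q :: real ^ 'n. q \<in> Qbox \<Longrightarrow> abscissa P m q \<le> v q"
    proof -
      fix q :: "real ^ 'n" assume qQ: "q \<in> Qbox"
      obtain s where s: "pval P m q s = 0" "Re s = abscissa P m q"
        using abscissa_attained[of P m q] Pm1 assms(1) by auto
      have "(q, Re s, Im s) \<in> Zset P m" using qQ s(1) unfolding Zset_def pRe_def pIm_def by simp
      then show "abscissa P m q \<le> v q" using v(3) s by fastforce
    qed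
    then show "integral Qbox (abscissa P m) \<le> z" using integral_le[OF ia iv] v(1) by blast
  qed
qed

end
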